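(* Let $\kappa$ be an infinite cardinal and let $d>0$ and $m$ be natural numbers. Then \[ w\chi_{\rm CF}(\kappa^{+m},\kappa,d)\le \left\lfloor \frac{(m+1)(d-1)+1}{2}\right\rfloor+1 . \]
   Context: For a family $\mathcal A$ of sets and a cardinal $\rho$, a function $f$ with $\operatorname{dom}(f)\subseteq\bigcup\mathcal A$ and values in $\rho$ is a weak conflict free coloring of $\mathcal A$ if for every $A\in\mathcal A$ there is $\zeta<\rho$ with $|A\cap f^{-1}\{\zeta\}|=1$; $w\chi_{\rm CF}(\mathcal A)$ is the least $\rho$ admitting such a coloring. A family is $\mu$-almost disjoint if distinct members meet in fewer than $\mu$ points. A $(\lambda,\kappa,\mu)$-system is a $\mu$-almost disjoint family of $\lambda$ sets each of size $\kappa$ (members have at least two elements). For $\lambda\ge\kappa\ge\mu$, $\lambda$ infinite, $w\chi_{\rm CF}(\lambda,\kappa,\mu)=\sup\{w\chi_{\rm CF}(\mathcal A):\mathcal A$ a $(\lambda,\kappa,\mu)$-system$\}$. $\kappa^{+m}$ is the $m$-th successor cardinal of $\kappa$. *)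

theory Defs
  imports Main
begin

text \<open>has_card_suc_iter m K L: the set L has cardinality kappa^{+m}, where kappa = |K|.
  The intermediate cardinals are witnessed by subsets of L.\<close>
fun has_card_suc_iter :: "nat \<Rightarrow> 'k set \<Rightarrow> 'b set \<Rightarrow> bool" where
  "has_card_suc_iter 0 K L = ((card_of L, card_of K) \<in> ordIso)"
| "has_card_suc_iter (Suc m) K L =
     (\<exists>L'. L' \<subseteq> L \<and> has_card_suc_iter m K L' \<and> (card_of L, cardSuc (card_of L')) \<in> ordIso)"

definition almost_disjoint_fin :: "nat \<Rightarrow> 'a set set \<Rightarrow> bool" where
  "almost_disjoint_fin d \<A> \<longleftrightarrow>
     (\<forall>A\<in>\<A>. \<forall>B\<in>\<A>. A \<noteq> B \<longrightarrow> finite (A \<inter> B) \<and> card (A \<inter> B) < d)"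

definition is_system :: "nat \<Rightarrow> 'k set \<Rightarrow> nat \<Rightarrow> 'a set set \<Rightarrow> bool" where
  "is_system m K d \<A> \<longleftrightarrow>
     has_card_suc_iter m K \<A> \<and>
     (\<forall>A\<in>\<A>. (card_of A, card_of K) \<in> ordIso \<and> (\<exists>x y. x \<in> A \<and> y \<in> A \<and> x \<noteq> y)) \<and>
     almost_disjoint_fin d \<A>"

definition weak_cf_coloring :: "'a set set \<Rightarrow> nat \<Rightarrow> ('a \<Rightarrow> nat option) \<Rightarrow> bool" where
  "weak_cf_coloring \<A> \<rho> f \<longleftrightarrow>
     dom f \<subseteq> \<Union>\<A> \<and> ran f \<subseteq> {..<\<rho>} \<and>
     (\<forall>A\<in>\<A>. \<exists>\<zeta><\<rho>. card {x \<in> A. f x = Some \<zeta>} = 1)"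

end

theory Submission
  imports Defs "HOL-Algebra.Free_Abelian_Groups"
begin


lemma wf_choice:
  assumes wf: "wf R"
  and cong: "\<And>a f f' c. (\<And>b. (b,a) \<in> R \<Longrightarrow> f b = f' b) \<Longrightarrow> P a f c \<Longrightarrow> P a f' c"
  and ex: "\<And>a f. (\<And>b. (b,a) \<in> R \<Longrightarrow> P b f (f b)) \<Longrightarrow> \<exists>c. P a f c"
  shows "\<exists>\<Phi>. \<forall>a. P a \<Phi> (\<Phi> a)"
proof -
  define \<Phi> where "\<Phi> = wfrec R (\<lambda>f a. SOME c. P a f c)"
  have eq: "\<Phi> a = (SOME c. P a (cut \<Phi> R a) c)" for a
    unfolding \<Phi>_def by (subst wfrec[OF wf]) simp
  have "P a \<Phi> (\<Phi> a)" for a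
    using wf
  proof (induction a rule: wf_induct_rule)
    case (less a)
    then obtain c where "P a \<Phi> c" using ex by blast
    then have "P a (cut \<Phi> R a) c" by (rule cong[rotated]) (simp add: cut_apply)
    then have "P a (cut \<Phi> R a) (\<Phi> a)" unfolding eq[of a] by (rule someI)
    then show ?case by (rule cong[rotated]) (simp add: cut_apply)
  qed
  then show ?thesis by blast
qed

definition U :: "('i \<Rightarrow> ('a \<Rightarrow> 'b option)) \<Rightarrow> 'i set \<Rightarrow> 'a \<Rightarrow> 'b option" where
  "U \<Phi> I x = (if \<exists>i\<in>I. x \<in> dom (\<Phi> i) then \<Phi> (SOME i. i \<in> I \<and> x \<in> dom (\<Phi> i)) x else None)"

lemma U_cong:
  assumes h: "\<And>i. i \<in> I \<Longrightarrow> \<Phi> i = \<Phi>' i"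
  shows "U \<Phi> I = U \<Phi>' I"
proof
  fix x
  have e: "(\<lambda>i. i \<in> I \<and> x \<in> dom (\<Phi> i)) = (\<lambda>i. i \<in> I \<and> x \<in> dom (\<Phi>' i))"
    using h by auto
  have e2: "(\<exists>i\<in>I. x \<in> dom (\<Phi> i)) = (\<exists>i\<in>I. x \<in> dom (\<Phi>' i))" using h by auto
  show "U \<Phi> I x = U \<Phi>' I x"
  proof (cases "\<exists>i\<in>I. x \<in> dom (\<Phi> i)")
    case True
    then have "(SOME i. i \<in> I \<and> x \<in> dom (\<Phi> i)) \<in> I" by (metis (mono_tags, lifting) someI_ex)
    then show ?thesis unfolding U_def e2 e using h e by (metis (no_types, lifting))
  qed (simp add: U_def e2)
qed

lemma dom_U: "dom (U \<Phi> I) \<subseteq> (\<Union>i\<in>I. dom (\<Phi> i))"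
  unfolding U_def by (auto split: if_splits)

lemma ran_U: "ran (U \<Phi> I) \<subseteq> (\<Union>i\<in>I. ran (\<Phi> i))"
proof
  fix y assume "y \<in> ran (U \<Phi> I)"
  then obtain x where x: "U \<Phi> I x = Some y" by (auto simp: ran_def)
  then have ex: "\<exists>i\<in>I. x \<in> dom (\<Phi> i)" unfolding U_def by (auto split: if_splits)
  define i where "i = (SOME i. i \<in> I \<and> x \<in> dom (\<Phi> i))"
  have "i \<in> I" unfolding i_def using ex by (metis (mono_tags, lifting) someI_ex)
  moreover have "\<Phi> i x = Some y" using x ex unfolding U_def i_def by auto
  ultimately show "y \<in> (\<Union>i\<in>I. ran (\<Phi> i))" by (auto simp: ran_def)
qed

lemma U_at:
  assumes disj: "\<And>i j. i \<in> I \<Longrightarrow> j \<in> I \<Longrightarrow> i \<noteq> j \<Longrightarrow> dom (\<Phi> i) \<inter> dom (\<Phi> j) = {}"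
    and "i \<in> I" "x \<in> dom (\<Phi> i)"
  shows "U \<Phi> I x = \<Phi> i x"
proof -
  have "\<exists>j\<in>I. x \<in> dom (\<Phi> j)" using assms by blast
  then have s: "(SOME j. j \<in> I \<and> x \<in> dom (\<Phi> j)) \<in> I \<and> x \<in> dom (\<Phi> (SOME j. j \<in> I \<and> x \<in> dom (\<Phi> j)))"
    by (metis (mono_tags, lifting) someI_ex)
  then have "(SOME j. j \<in> I \<and> x \<in> dom (\<Phi> j)) = i" using disj assms by blast
  then show ?thesis unfolding U_def using assms by auto
qed

lemma U_out: "(\<And>i. i \<in> I \<Longrightarrow> x \<notin> dom (\<Phi> i)) \<Longrightarrow> U \<Phi> I x = None"
  unfolding U_def by auto

lemma U_local:
  assumes disj: "\<And>i j. i \<in> I \<Longrightarrow> j \<in> I \<Longrightarrow> i \<noteq> j \<Longrightarrow> dom (\<Phi> i) \<inter> dom (\<Phi> j) = {}"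
    and a: "a \<in> I" and P: "P \<subseteq> I" "a \<notin> P"
    and x: "\<And>b. b \<in> I \<Longrightarrow> x \<in> dom (\<Phi> b) \<Longrightarrow> b \<in> P \<or> b = a"
  shows "U \<Phi> I x = (U \<Phi> P ++ \<Phi> a) x"
proof (cases "\<exists>b\<in>I. x \<in> dom (\<Phi> b)")
  case True
  then obtain b where b: "b \<in> I" "x \<in> dom (\<Phi> b)" by blast
  have disjP: "\<And>i j. i \<in> P \<Longrightarrow> j \<in> P \<Longrightarrow> i \<noteq> j \<Longrightarrow> dom (\<Phi> i) \<inter> dom (\<Phi> j) = {}"
    using disj P by blast
  from x[OF b] show ?thesis
  proof
    assume "b \<in> P"
    then have "x \<notin> dom (\<Phi> a)" using disj[of a b] b a P by blast
    then show ?thesis using U_at[of I \<Phi>, OF disj b] U_at[of P \<Phi>, OF disjP \<open>b \<in> P\<close> b(2)]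
      by (simp add: map_add_def domIff)
  next
    assume "b = a"
    then show ?thesis using U_at[of I \<Phi>, OF disj b] b by (auto simp: map_add_def)
  qed
next
  case False
  then have "U \<Phi> I x = None" by (intro U_out) auto
  moreover have "U \<Phi> P x = None" using False P by (intro U_out) auto
  ultimately show ?thesis using False a by (auto simp: map_add_def domIff)
qed



lemma small_union_finite:
  assumes K: "infinite K" and I: "|I| <o |K|" and F: "\<And>i. i \<in> I \<Longrightarrow> finite (F i)"
  shows "|\<Union>i\<in>I. F i| <o |K|"
proof (cases "finite I")
  case True
  then have "finite (\<Union>i\<in>I. F i)" using F by blast
  then show ?thesis using K finite_ordLess_infinite2 by blast
next
  case False
  have "|\<Union>i\<in>I. F i| \<le>o |I|"
    apply (rule card_of_UNION_ordLeq_infinite[OF False])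
     apply (simp add: ordLeq_refl card_of_Card_order)
    using F False finite_ordLess_infinite2 ordLess_imp_ordLeq by blast
  then show ?thesis using I ordLeq_ordLess_trans by blast
qed

lemma small_Fpow:
  assumes K: "infinite K" and X: "|X| <o |K|"
  shows "|Fpow X| <o |K|"
proof (cases "finite X")
  case True
  then have "finite (Fpow X)" unfolding Fpow_def by (simp add: finite_Collect_subsets)
  then show ?thesis using K finite_ordLess_infinite2 by blast
next
  case False
  then show ?thesis using card_of_Fpow_infinite X ordIso_ordLess_trans by blast
qed

definition span :: "nat \<Rightarrow> 'a set set \<Rightarrow> 'a set \<Rightarrow> 'a set set" where
  "span d \<A> X = {B\<in>\<A>. \<exists>F. F \<subseteq> B \<inter> X \<and> finite F \<and> card F = d}"

lemma span_le_Fpow: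
  assumes AD: "almost_disjoint_fin d \<A>"
  shows "|span d \<A> X| \<le>o |Fpow X|"
proof -
  define f where "f B = (SOME F. F \<subseteq> B \<inter> X \<and> finite F \<and> card F = d)" for B
  have fB: "f B \<subseteq> B \<inter> X \<and> finite (f B) \<and> card (f B) = d" if "B \<in> span d \<A> X" for B
    using that unfolding span_def f_def by (metis (mono_tags, lifting) mem_Collect_eq someI_ex)
  have "inj_on f (span d \<A> X)"
  proof (rule inj_onI, rule ccontr)
    fix B1 B2 assume b: "B1 \<in> span d \<A> X" "B2 \<in> span d \<A> X" "f B1 = f B2" "B1 \<noteq> B2"
    then have "B1 \<in> \<A>" "B2 \<in> \<A>" unfolding span_def by auto
    then have fi: "finite (B1 \<inter> B2)" "card (B1 \<inter> B2) < d" using AD b unfolding almost_disjoint_fin_def by auto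
    have "f B1 \<subseteq> B1 \<inter> B2" using fB[OF b(1)] fB[OF b(2)] b(3) by auto
    then have "card (f B1) \<le> card (B1 \<inter> B2)" using fi card_mono by blast
    then show False using fi fB[OF b(1)] by simp
  qed
  moreover have "f ` span d \<A> X \<subseteq> Fpow X" using fB unfolding Fpow_def by auto
  ultimately show ?thesis using card_of_ordLeq by blast
qed

lemma colour_count:
  fixes G :: "'a \<Rightarrow> nat option"
  assumes fin: "finite (A \<inter> dom G)" and c: "card (A \<inter> dom G) \<le> N"
    and nou: "\<not> (\<exists>\<zeta><N div 2 + 1. card {x\<in>A. G x = Some \<zeta>} = 1)"
  shows "\<exists>\<zeta><N div 2 + 1. {x\<in>A. G x = Some \<zeta>} = {}"
proof (rule ccontr)
  assume "\<not> ?thesis"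
  then have ne: "\<And>\<zeta>. \<zeta> < N div 2 + 1 \<Longrightarrow> {x\<in>A. G x = Some \<zeta>} \<noteq> {}" by blast
  define S where "S \<zeta> = {x\<in>A. G x = Some \<zeta>}" for \<zeta>
  have sub: "S \<zeta> \<subseteq> A \<inter> dom G" for \<zeta> unfolding S_def by auto
  then have finS: "finite (S \<zeta>)" for \<zeta> using fin finite_subset by blast
  have ge2: "2 \<le> card (S \<zeta>)" if "\<zeta> < N div 2 + 1" for \<zeta>
  proof -
    have "card (S \<zeta>) \<noteq> 0" using ne[OF that] finS unfolding S_def by auto
    moreover have "card (S \<zeta>) \<noteq> 1" using nou that unfolding S_def by auto
    ultimately show ?thesis by linarith
  qed
  have disj: "\<forall>i\<in>{..<N div 2 + 1}. \<forall>j\<in>{..<N div 2 + 1}. i \<noteq> j \<longrightarrow> S i \<inter> S j = {}"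
    unfolding S_def by auto
  have "card (\<Union>\<zeta>\<in>{..<N div 2 + 1}. S \<zeta>) = (\<Sum>\<zeta>\<in>{..<N div 2 + 1}. card (S \<zeta>))"
    by (rule card_UN_disjoint) (use finS disj in auto)
  also have "\<dots> \<ge> (\<Sum>\<zeta>\<in>{..<N div 2 + 1}. 2)" by (rule sum_mono) (use ge2 in auto)
  finally have "2 * (N div 2 + 1) \<le> card (\<Union>\<zeta>\<in>{..<N div 2 + 1}. S \<zeta>)" by simp
  also have "\<dots> \<le> card (A \<inter> dom G)" by (rule card_mono[OF fin]) (use sub in auto)
  moreover have "N < 2 * (N div 2 + 1)" by presburger
  ultimately show False using c by linarith
qed



lemma co_wo: "well_order_on S |S|" by (rule card_of_well_order_on)

lemma co_field: "(a,b) \<in> |S| \<Longrightarrow> a \<in> S \<and> b \<in> S"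
  using Field_card_of[of S] unfolding Field_def by blast

lemma co_worel: "wo_rel |S|"
  unfolding wo_rel_def by (rule card_of_Well_order)

lemma co_total: "a \<in> S \<Longrightarrow> b \<in> S \<Longrightarrow> (a,b) \<in> |S| \<or> (b,a) \<in> |S|"
  using wo_rel.TOTALS[OF co_worel[of S]] Field_card_of[of S] by simp

lemma co_trans: "(a,b) \<in> |S| \<Longrightarrow> (b,c) \<in> |S| \<Longrightarrow> (a,c) \<in> |S|"
  using wo_rel.TRANS[OF co_worel[of S]] unfolding trans_def by blast

lemma co_antisym: "(a,b) \<in> |S| \<Longrightarrow> (b,a) \<in> |S| \<Longrightarrow> a = b"
  using wo_rel.ANTISYM[OF co_worel[of S]] unfolding antisym_def by blast

lemma co_refl: "a \<in> S \<Longrightarrow> (a,a) \<in> |S|"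
  using co_total[of a S a] by blast

lemma co_wf: "wf ( |S| - Id)"
  using co_wo[of S] unfolding well_order_on_def by (rule conjunct2)

lemma co_max:
  assumes "finite T" "T \<noteq> {}" "T \<subseteq> S"
  shows "\<exists>m\<in>T. \<forall>b\<in>T. (b,m) \<in> |S|"
  using assms
proof (induction T rule: finite_ne_induct)
  case (singleton x) then show ?case using co_refl by auto
next
  case (insert x T)
  then obtain m where m: "m \<in> T" "\<forall>b\<in>T. (b,m) \<in> |S|" by auto
  show ?case
  proof (cases "(x,m) \<in> |S|")
    case True then show ?thesis using m by auto
  next
    case False
    then have "(m,x) \<in> |S|" using co_total[of x S m] insert m by auto
    then show ?thesis using m co_trans[of _ m S x] insert co_refl[of x S] by auto
  qed
qed

lemma AD_mono: "almost_disjoint_fin d \<A> \<Longrightarrow> \<B> \<subseteq> \<A> \<Longrightarrow> almost_disjoint_fin d \<B>"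
  unfolding almost_disjoint_fin_def by blast

lemma AD_fin: "almost_disjoint_fin d \<A> \<Longrightarrow> A \<in> \<A> \<Longrightarrow> B \<in> \<A> \<Longrightarrow> A \<noteq> B \<Longrightarrow> finite (A \<inter> B)"
  unfolding almost_disjoint_fin_def by blast

lemma underS_co: "B \<in> underS |S| A \<longleftrightarrow> B \<noteq> A \<and> (B,A) \<in> |S|"
  unfolding underS_def by auto



lemma base_case:
  fixes K :: "'k set" and \<A> :: "'a set set" and g :: "'a \<Rightarrow> nat option"
  assumes K: "infinite K" and d: "d > 0" and card: "|\<A>| \<le>o |K|" and AD: "almost_disjoint_fin d \<A>"
    and mem: "\<forall>A\<in>\<A>. |A| =o |K|" and Yf: "\<forall>A\<in>\<A>. finite (A \<inter> Y)" and gY: "dom g \<subseteq> Y"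
    and gp: "\<forall>A\<in>\<A>. card (A \<inter> dom g) \<le> p"
  shows "\<exists>h. dom h \<subseteq> \<Union>\<A> - Y \<and> ran h \<subseteq> {..<(p + d) div 2 + 1} \<and>
           (\<forall>A\<in>\<A>. \<exists>\<zeta><(p + d) div 2 + 1. card {x\<in>A. (g ++ h) x = Some \<zeta>} = 1)"
proof -
  define \<rho> where "\<rho> = (p + d) div 2 + 1"
  define W where "W = |\<A>|"
  define R where "R = W - Id"
  define Pre where "Pre A = underS W A" for A
  have wfR: "wf R" unfolding R_def W_def by (rule co_wf)
  have Pre_iff: "B \<in> Pre A \<longleftrightarrow> (B, A) \<in> R" for A B
    unfolding Pre_def R_def W_def underS_def by auto
  have Pre_sub: "Pre A \<subseteq> \<A>" for A unfolding Pre_def W_def using co_field underS_co by fast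
  have A_notin_Pre: "A \<notin> Pre A" for A unfolding Pre_def underS_def by auto
  define C where "C \<Phi> A = (\<Union>B\<in>Pre A. dom (\<Phi> B))" for \<Phi> :: "'a set \<Rightarrow> 'a \<Rightarrow> nat option" and A
  define Good where "Good A \<Phi> h \<longleftrightarrow> A \<in> \<A> \<longrightarrow>
      (dom h \<subseteq> A - Y - \<Union>(Pre A) - \<Union>(span d (\<A> - {A}) (C \<Phi> A)) \<and> finite (dom h) \<and> card (dom h) \<le> 1
       \<and> ran h \<subseteq> {..<\<rho>} \<and> (\<exists>\<zeta><\<rho>. card {x\<in>A. ((g ++ U \<Phi> (Pre A)) ++ h) x = Some \<zeta>} = 1))"
    for A \<Phi> h
  have "\<exists>\<Phi>. \<forall>A. Good A \<Phi> (\<Phi> A)"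
  proof (rule wf_choice[OF wfR])
    fix A f f' c
    assume eq: "\<And>b. (b, A) \<in> R \<Longrightarrow> f b = f' b" and G: "Good A f c"
    have "U f (Pre A) = U f' (Pre A)" by (rule U_cong) (use eq Pre_iff in auto)
    moreover have "C f A = C f' A" unfolding C_def using eq Pre_iff by auto
    ultimately show "Good A f' c" using G unfolding Good_def by simp
  next
    fix A f
    assume IH: "\<And>b. (b, A) \<in> R \<Longrightarrow> Good b f (f b)"
    show "\<exists>c. Good A f c"
    proof (cases "A \<in> \<A>")
      case False then show ?thesis unfolding Good_def by blast
    next
      case A: True
      have GB: "Good B f (f B)" if "B \<in> Pre A" for B using IH Pre_iff that by blast
      have domB: "dom (f B) \<subseteq> B - \<Union>(Pre B) - \<Union>(span d (\<A> - {B}) (C f B))"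
        "finite (dom (f B))" "card (dom (f B)) \<le> 1" if "B \<in> Pre A" for B
        using GB[OF that] Pre_sub that unfolding Good_def by blast+
      define G where "G = g ++ U f (Pre A)"
      have AK: "|A| =o |K|" using mem A by blast
      have AC: "finite (A \<inter> C f A) \<and> card (A \<inter> C f A) \<le> d"
      proof (rule ccontr)
        assume nt: "\<not> ?thesis"
        then obtain F where F: "F \<subseteq> A \<inter> C f A" "finite F" "card F = Suc d"
        proof (cases "finite (A \<inter> C f A)")
          case True
          assume h: "\<And>F. F \<subseteq> A \<inter> C f A \<Longrightarrow> finite F \<Longrightarrow> card F = Suc d \<Longrightarrow> thesis"
          from True nt have "Suc d \<le> card (A \<inter> C f A)" by auto
          then show thesis using h by (meson obtain_subset_with_card_n finite_subset True)
        next
          case False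
          assume h: "\<And>F. F \<subseteq> A \<inter> C f A \<Longrightarrow> finite F \<Longrightarrow> card F = Suc d \<Longrightarrow> thesis"
          then show thesis using False infinite_arbitrarily_large by metis
        qed
        define s where "s x = (SOME B. B \<in> Pre A \<and> x \<in> dom (f B))" for x
        have s: "s x \<in> Pre A \<and> x \<in> dom (f (s x))" if "x \<in> F" for x
          using F(1) that unfolding s_def C_def by (metis (mono_tags, lifting) IntE UN_iff someI_ex subsetD)
        have sinj: "x = y" if "x \<in> F" "y \<in> F" "s x = s y" for x y
        proof -
          have "{x, y} \<subseteq> dom (f (s x))" using s[OF that(1)] s[OF that(2)] that(3) by auto
          then have "card {x,y} \<le> 1" using domB(2,3)[of "s x"] s that card_mono order_trans by metis
          then show ?thesis by (cases "x = y") auto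
        qed
        have "F \<noteq> {}" using F by auto
        then obtain x0 where x0: "x0 \<in> F" "\<forall>y\<in>F. (s y, s x0) \<in> W"
          using co_max[of "s ` F" \<A>] F(2) s Pre_sub unfolding W_def by fastforce
        define b0 where "b0 = s x0"
        have b0: "b0 \<in> Pre A" "x0 \<in> dom (f b0)" using s x0 b0_def by auto
        have "F - {x0} \<subseteq> A \<inter> C f b0"
        proof
          fix y assume y: "y \<in> F - {x0}"
          then have "s y \<noteq> b0" using sinj x0 b0_def by auto
          then have "s y \<in> Pre b0" using x0 y b0_def unfolding Pre_def underS_def by auto
          moreover have "y \<in> dom (f (s y))" using s y by blast
          ultimately show "y \<in> A \<inter> C f b0" using y F unfolding C_def by blast
        qed
        moreover have "card (F - {x0}) = d" using F x0 by simp
        moreover have "A \<in> \<A> - {b0}" using A b0(1) A_notin_Pre by auto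
        moreover have "finite (F - {x0})" using F(2) by simp
        ultimately have "A \<in> span d (\<A> - {b0}) (C f b0)"
          unfolding span_def by blast
        then have "x0 \<notin> A" using domB(1)[OF b0(1)] b0 by blast
        then show False using x0 F by blast
      qed
      have domG: "dom G \<subseteq> dom g \<union> C f A"
        unfolding G_def C_def using dom_U[of f "Pre A"] by auto
      have AG: "A \<inter> dom G \<subseteq> (A \<inter> dom g) \<union> (A \<inter> C f A)" using domG by auto
      have fin_g: "finite (A \<inter> dom g)" using Yf A gY by (meson Int_mono finite_subset order_refl)
      have finAG: "finite (A \<inter> dom G)" using AG AC fin_g finite_subset by blast
      have cardAG: "card (A \<inter> dom G) \<le> p + d"
      proof -
        have "card (A \<inter> dom G) \<le> card ((A \<inter> dom g) \<union> (A \<inter> C f A))"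
          using AG AC fin_g by (intro card_mono) auto
        also have "\<dots> \<le> card (A \<inter> dom g) + card (A \<inter> C f A)" by (rule card_Un_le)
        finally show ?thesis using AC gp A by fastforce
      qed
      show ?thesis
      proof (cases "\<exists>\<zeta><\<rho>. card {x\<in>A. G x = Some \<zeta>} = 1")
        case True
        then show ?thesis unfolding Good_def G_def by (intro exI[of _ Map.empty]) auto
      next
        case False
        then obtain \<zeta> where z: "\<zeta> < \<rho>" "{x\<in>A. G x = Some \<zeta>} = {}"
          using colour_count[OF finAG cardAG] unfolding \<rho>_def by blast
        define S where "S = span d (\<A> - {A}) (C f A)"
        have PreK: "|Pre A| <o |K|"
          using card_of_underS[of W A] card_of_Card_order[of \<A>] A Field_card_of[of \<A>] card
          unfolding Pre_def W_def using ordLess_ordLeq_trans by blast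
        have CK: "|C f A| <o |K|" unfolding C_def
          by (rule small_union_finite[OF K PreK]) (use domB in auto)
        have SK: "|S| <o |K|"
          using span_le_Fpow[OF AD_mono[OF AD, of "\<A> - {A}"], of "C f A"] small_Fpow[OF K CK]
          unfolding S_def using ordLeq_ordLess_trans by blast
        have S_sub: "B \<in> \<A> \<and> B \<noteq> A" if "B \<in> S" for B using that unfolding S_def span_def by auto
        define Bad where "Bad = (A \<inter> Y) \<union> (\<Union>B\<in>Pre A. A \<inter> B) \<union> (\<Union>B\<in>S. A \<inter> B)"
        have "|Bad| <o |K|" unfolding Bad_def
        proof (intro card_of_Un_ordLess_infinite[OF K])
          show "|A \<inter> Y| <o |K|" using Yf A K finite_ordLess_infinite2 by blast
          show "|\<Union>B\<in>Pre A. A \<inter> B| <o |K|"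
            by (rule small_union_finite[OF K PreK])
              (use AD_fin[OF AD] A Pre_sub A_notin_Pre in blast)
          show "|\<Union>B\<in>S. A \<inter> B| <o |K|"
            by (rule small_union_finite[OF K SK]) (use AD_fin[OF AD] A S_sub in blast)
        qed
        then have "\<not> A \<subseteq> Bad"
          using AK card_of_mono1 ordLeq_ordLess_trans not_ordLess_ordIso by (metis ordIso_symmetric ordIso_ordLess_trans ordLess_irreflexive)
        then obtain x where x: "x \<in> A" "x \<notin> Bad" by blast
        have xG: "x \<notin> dom G"
        proof
          assume "x \<in> dom G"
          then have "x \<in> dom g \<union> C f A" using domG by blast
          then show False
          proof
            assume "x \<in> dom g" then show False using x gY unfolding Bad_def by blast
          next
            assume "x \<in> C f A"
            then obtain B where "B \<in> Pre A" "x \<in> dom (f B)" unfolding C_def by blast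
            then show False using domB(1) x unfolding Bad_def by blast
          qed
        qed
        have uniq: "{y\<in>A. (G ++ Map.empty(x \<mapsto> \<zeta>)) y = Some \<zeta>} = {x}"
          using z(2) x(1) by (auto simp: map_add_def split: option.splits)
        show ?thesis unfolding Good_def
          apply (intro exI[of _ "Map.empty(x \<mapsto> \<zeta>)"] impI conjI)
          using x unfolding Bad_def S_def apply auto[1]
             apply simp apply simp
          using z(1) apply simp
          using uniq z(1) unfolding G_def by (intro exI[of _ \<zeta>]) simp
      qed
    qed
  qed
  then obtain \<Phi> where \<Phi>: "\<And>A. Good A \<Phi> (\<Phi> A)" by blast
  have dom\<Phi>: "dom (\<Phi> A) \<subseteq> A - Y - \<Union>(Pre A)" and ran\<Phi>: "ran (\<Phi> A) \<subseteq> {..<\<rho>}"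
    and uq: "\<exists>\<zeta><\<rho>. card {x\<in>A. ((g ++ U \<Phi> (Pre A)) ++ \<Phi> A) x = Some \<zeta>} = 1"
    if "A \<in> \<A>" for A using \<Phi>[of A] that unfolding Good_def by blast+
  have notin: "x \<notin> dom (\<Phi> B)" if "A \<in> Pre B" "x \<in> A" "B \<in> \<A>" for A B x
    using dom\<Phi>[OF that(3)] that by blast
  have disj: "dom (\<Phi> A) \<inter> dom (\<Phi> B) = {}" if "A \<in> \<A>" "B \<in> \<A>" "A \<noteq> B" for A B
  proof -
    have "A \<in> Pre B \<or> B \<in> Pre A" using co_total[of A \<A> B] that unfolding Pre_def W_def underS_def by auto
    then show ?thesis using notin dom\<Phi> that by blast
  qed
  define H where "H = U \<Phi> \<A>"
  show ?thesis
  proof (intro exI[of _ H] conjI ballI)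
    show "dom H \<subseteq> \<Union>\<A> - Y" unfolding H_def using dom_U[of \<Phi> \<A>] dom\<Phi> by blast
    show "ran H \<subseteq> {..<(p + d) div 2 + 1}" unfolding H_def \<rho>_def[symmetric]
      using ran_U[of \<Phi> \<A>] ran\<Phi> by blast
    fix A assume A: "A \<in> \<A>"
    have loc: "H x = (U \<Phi> (Pre A) ++ \<Phi> A) x" if "x \<in> A" for x
      unfolding H_def
    proof (rule U_local[OF disj A Pre_sub A_notin_Pre])
      fix b assume b: "b \<in> \<A>" "x \<in> dom (\<Phi> b)"
      show "b \<in> Pre A \<or> b = A"
      proof (rule ccontr)
        assume "\<not> ?thesis"
        then have "A \<in> Pre b" using co_total[of A \<A> b] A b unfolding Pre_def W_def underS_def by auto
        then show False using notin[of A b x] that b by blast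
      qed
    qed
    have "{x\<in>A. (g ++ H) x = Some \<zeta>} = {x\<in>A. ((g ++ U \<Phi> (Pre A)) ++ \<Phi> A) x = Some \<zeta>}" for \<zeta>
      using loc by (auto simp: map_add_def split: option.splits)
    then show "\<exists>\<zeta><(p + d) div 2 + 1. card {x\<in>A. (g ++ H) x = Some \<zeta>} = 1"
      using uq[OF A] unfolding \<rho>_def by simp
  qed
qed



primrec clo :: "nat \<Rightarrow> 'a set set \<Rightarrow> 'a set set \<Rightarrow> nat \<Rightarrow> 'a set set" where
  "clo d \<A> S 0 = S"
| "clo d \<A> S (Suc n) = clo d \<A> S n \<union> span d \<A> (\<Union>(clo d \<A> S n))"

definition cl :: "nat \<Rightarrow> 'a set set \<Rightarrow> 'a set set \<Rightarrow> 'a set set" where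
  "cl d \<A> S = (\<Union>n. clo d \<A> S n)"

lemma span_sub: "span d \<A> X \<subseteq> \<A>" unfolding span_def by auto

lemma span_mono: "X \<subseteq> X' \<Longrightarrow> span d \<A> X \<subseteq> span d \<A> X'"
  unfolding span_def by blast

lemma clo_sub: "S \<subseteq> \<A> \<Longrightarrow> clo d \<A> S n \<subseteq> \<A>"
  by (induction n) (auto simp: span_def)

lemma cl_sub: "S \<subseteq> \<A> \<Longrightarrow> cl d \<A> S \<subseteq> \<A>"
  unfolding cl_def using clo_sub by blast

lemma cl_ext: "S \<subseteq> cl d \<A> S"
  unfolding cl_def by (metis UN_upper UNIV_I clo.simps(1))

lemma clo_mono_S: "S \<subseteq> S' \<Longrightarrow> clo d \<A> S n \<subseteq> clo d \<A> S' n"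
proof (induction n)
  case (Suc n)
  then have "span d \<A> (\<Union>(clo d \<A> S n)) \<subseteq> span d \<A> (\<Union>(clo d \<A> S' n))"
    by (intro span_mono) blast
  then show ?case using Suc by auto
qed simp

lemma cl_mono: assumes "S \<subseteq> S'" shows "cl d \<A> S \<subseteq> cl d \<A> S'"
  unfolding cl_def using clo_mono_S[OF assms, of d \<A>] by blast

lemma clo_mono_n: "m \<le> n \<Longrightarrow> clo d \<A> S m \<subseteq> clo d \<A> S n"
proof (induction n)
  case (Suc n)
  then show ?case by (cases "m = Suc n") auto
qed simp

lemma finite_in_chain:
  assumes "finite F" "F \<subseteq> (\<Union>n. X n)" "\<And>m n. m \<le> n \<Longrightarrow> X m \<subseteq> X (n::nat)"
  shows "\<exists>N. F \<subseteq> X N"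
  using assms(1,2)
proof (induction F rule: finite_induct)
  case empty then show ?case by auto
next
  case (insert x F)
  then obtain N where N: "F \<subseteq> X N" by auto
  obtain M where M: "x \<in> X M" using insert by auto
  have "F \<subseteq> X (max N M)" "x \<in> X (max N M)" using N M assms(3)[of N "max N M"] assms(3)[of M "max N M"] by auto
  then show ?case by blast
qed

lemma cl_closed:
  assumes "B \<in> \<A>" "F \<subseteq> B \<inter> \<Union>(cl d \<A> S)" "finite F" "card F = d"
  shows "B \<in> cl d \<A> S"
proof -
  have "F \<subseteq> (\<Union>n. \<Union>(clo d \<A> S n))" using assms(2) unfolding cl_def by blast
  then obtain N where "F \<subseteq> \<Union>(clo d \<A> S N)"
    using finite_in_chain[of F "\<lambda>n. \<Union>(clo d \<A> S n)"] assms(3) clo_mono_n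
    by (metis Union_mono)
  then have "B \<in> span d \<A> (\<Union>(clo d \<A> S N))" unfolding span_def using assms by auto
  then have "B \<in> clo d \<A> S (Suc N)" by simp
  then show ?thesis unfolding cl_def by blast
qed

lemma Fpow_le_infinite:
  assumes M: "infinite M" and X: "|X| \<le>o |M|"
  shows "|Fpow X| \<le>o |M|"
proof (cases "finite X")
  case True
  then have "finite (Fpow X)" unfolding Fpow_def by (simp add: finite_Collect_subsets)
  then show ?thesis using M finite_ordLess_infinite2 ordLess_imp_ordLeq by blast
next
  case False
  then show ?thesis using card_of_Fpow_infinite X ordIso_ordLeq_trans by blast
qed

lemma Un_le_infinite:
  assumes "infinite M" "|X| \<le>o |M|" "|Z| \<le>o |M|"
  shows "|X \<union> Z| \<le>o |M|"
  using card_of_Un_ordLeq_infinite_Field[of "|M|" X Z] assms card_of_Card_order[of M] Field_card_of[of M]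
  by simp

lemma cl_card:
  assumes AD: "almost_disjoint_fin d \<A>" and M: "infinite M" and mem: "\<forall>A\<in>\<A>. |A| \<le>o |M|"
    and S: "S \<subseteq> \<A>" "|S| \<le>o |M|"
  shows "|cl d \<A> S| \<le>o |M|"
proof -
  have n: "|clo d \<A> S n| \<le>o |M|" for n
  proof (induction n)
    case 0 then show ?case using S by simp
  next
    case (Suc n)
    have "\<forall>i\<in>clo d \<A> S n. |i| \<le>o |M|" using mem clo_sub[OF S(1), of d n] by blast
    then have "|\<Union>(clo d \<A> S n)| \<le>o |M|"
      using card_of_UNION_ordLeq_infinite[OF M Suc, of "\<lambda>i. i"] by simp
    then have "|Fpow (\<Union>(clo d \<A> S n))| \<le>o |M|" by (rule Fpow_le_infinite[OF M])
    then have "|span d \<A> (\<Union>(clo d \<A> S n))| \<le>o |M|"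
      by (rule ordLeq_transitive[OF span_le_Fpow[OF AD]])
    then show ?case using Un_le_infinite[OF M Suc] by simp
  qed
  have u: "|UNIV :: nat set| \<le>o |M|" using infinite_iff_card_of_nat[THEN iffD1, OF M] .
  have "\<forall>i\<in>(UNIV::nat set). |clo d \<A> S i| \<le>o |M|" using n by blast
  from card_of_UNION_ordLeq_infinite[OF M u this] have "|\<Union>i\<in>(UNIV::nat set). clo d \<A> S i| \<le>o |M|" .
  then show ?thesis by (simp only: cl_def)
qed



lemma step_case:
  fixes K :: "'k set" and \<A> :: "'a set set" and g :: "'a \<Rightarrow> nat option" and L' :: "'a set set"
  assumes K: "infinite K" and d: "d > 0"
    and IH: "\<And>\<A>' p Y g. |\<A>'| \<le>o |L'| \<Longrightarrow> almost_disjoint_fin d \<A>' \<Longrightarrow> (\<forall>A\<in>\<A>'. |A| =o |K| ) \<Longrightarrow>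
        (\<forall>A\<in>\<A>'. finite (A \<inter> Y)) \<Longrightarrow> dom (g::'a \<Rightarrow> nat option) \<subseteq> Y \<Longrightarrow> (\<forall>A\<in>\<A>'. card (A \<inter> dom g) \<le> p) \<Longrightarrow>
        \<exists>h. dom h \<subseteq> \<Union>\<A>' - Y \<and> ran h \<subseteq> {..<(p + m * (d - 1) + d) div 2 + 1} \<and>
           (\<forall>A\<in>\<A>'. \<exists>\<zeta><(p + m * (d - 1) + d) div 2 + 1. card {x\<in>A. (g ++ h) x = Some \<zeta>} = 1)"
    and KL: "|K| \<le>o |L'|" and card: "|\<A>| \<le>o cardSuc |L'|" and AD: "almost_disjoint_fin d \<A>"
    and mem: "\<forall>A\<in>\<A>. |A| =o |K|" and Yf: "\<forall>A\<in>\<A>. finite (A \<inter> Y)" and gY: "dom g \<subseteq> Y"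
    and gp: "\<forall>A\<in>\<A>. card (A \<inter> dom g) \<le> p"
  shows "\<exists>h. dom h \<subseteq> \<Union>\<A> - Y \<and> ran h \<subseteq> {..<(p + Suc m * (d - 1) + d) div 2 + 1} \<and>
           (\<forall>A\<in>\<A>. \<exists>\<zeta><(p + Suc m * (d - 1) + d) div 2 + 1. card {x\<in>A. (g ++ h) x = Some \<zeta>} = 1)"
proof -
  define \<rho> where "\<rho> = (p + Suc m * (d - 1) + d) div 2 + 1"
  have \<rho>': "(p + (d - 1) + m * (d - 1) + d) div 2 + 1 = \<rho>" unfolding \<rho>_def by simp
  define W where "W = |\<A>|"
  define R where "R = W - Id"
  define Pre where "Pre A = underS W A" for A
  have wfR: "wf R" unfolding R_def W_def by (rule co_wf)
  have Pre_iff: "B \<in> Pre A \<longleftrightarrow> (B, A) \<in> R" for A B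
    unfolding Pre_def R_def W_def underS_def by auto
  have Pre_sub: "Pre A \<subseteq> \<A>" for A unfolding Pre_def W_def using co_field underS_co by fast
  have A_notin_Pre: "A \<notin> Pre A" for A unfolding Pre_def underS_def by auto
  have Pre_trans: "B \<in> Pre A" if "B \<in> Pre C" "(C, A) \<in> W" for A B C
  proof -
    have "(B, C) \<in> W" "B \<noteq> C" using that(1) unfolding Pre_def underS_def by auto
    then have "(B, A) \<in> W" using that(2) co_trans[of B C \<A> A] unfolding W_def by blast
    moreover have "B \<noteq> A" using \<open>(B, C) \<in> W\<close> \<open>B \<noteq> C\<close> that(2) co_antisym[of B C \<A>] unfolding W_def by blast
    ultimately show ?thesis unfolding Pre_def underS_def by auto
  qed
  have Linf: "infinite L'" using K KL card_of_ordLeq_finite by blast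
  have memL: "\<forall>A\<in>\<A>. |A| \<le>o |L'|" using mem KL ordIso_ordLeq_trans by blast
  define D where "D A = cl d \<A> (insert A (Pre A))" for A
  define YP where "YP A = (\<Union>B\<in>Pre A. \<Union>(D B))" for A
  define E where "E A = D A - (\<Union>B\<in>Pre A. D B)" for A
  have D_sub: "D A \<subseteq> \<A>" if "A \<in> \<A>" for A unfolding D_def using cl_sub Pre_sub that by blast
  have E_sub: "E A \<subseteq> D A" for A unfolding E_def by blast
  have D_mono: "D B \<subseteq> D A" if "(B, A) \<in> W" for A B
  proof -
    have "insert B (Pre B) \<subseteq> insert A (Pre A)"
    proof
      fix C assume "C \<in> insert B (Pre B)"
      then show "C \<in> insert A (Pre A)"
      proof
        assume "C = B" then show ?thesis using that unfolding Pre_def underS_def by auto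
      next
        assume "C \<in> Pre B" then show ?thesis using Pre_trans that by blast
      qed
    qed
    then show ?thesis unfolding D_def by (rule cl_mono)
  qed
  have D_card: "|D A| \<le>o |L'|" if A: "A \<in> \<A>" for A
  proof -
    have "|Pre A| <o |\<A>|"
      using card_of_underS[of W A] card_of_Card_order[of \<A>] A Field_card_of[of \<A>]
      unfolding Pre_def W_def by simp
    then have "|Pre A| <o cardSuc |L'|" using card ordLess_ordLeq_trans by blast
    then have "|Pre A| \<le>o |L'|"
      using cardSuc_ordLeq_ordLess[OF card_of_Card_order[of L'] card_of_Card_order[of "Pre A"]] by blast
    moreover have "|{A}| \<le>o |L'|" using Linf card_of_singl_ordLeq[of L' A] by fastforce
    ultimately have "|{A} \<union> Pre A| \<le>o |L'|" using Un_le_infinite[OF Linf] by blast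
    then have "|insert A (Pre A)| \<le>o |L'|" by simp
    moreover have "insert A (Pre A) \<subseteq> \<A>" using Pre_sub A by blast
    ultimately show ?thesis unfolding D_def
      using cl_card[OF AD Linf memL] by blast
  qed
  have E_fin: "finite (B \<inter> YP A) \<and> card (B \<inter> YP A) < d" if B: "B \<in> E A" for A B
  proof (rule ccontr)
    assume nt: "\<not> ?thesis"
    then obtain F where F: "F \<subseteq> B \<inter> YP A" "finite F" "card F = d"
    proof (cases "finite (B \<inter> YP A)")
      case True
      assume h: "\<And>F. F \<subseteq> B \<inter> YP A \<Longrightarrow> finite F \<Longrightarrow> card F = d \<Longrightarrow> thesis"
      from True nt have "d \<le> card (B \<inter> YP A)" by auto
      then show thesis using h by (meson obtain_subset_with_card_n finite_subset True)
    next
      case False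
      assume h: "\<And>F. F \<subseteq> B \<inter> YP A \<Longrightarrow> finite F \<Longrightarrow> card F = d \<Longrightarrow> thesis"
      then show thesis using False infinite_arbitrarily_large by metis
    qed
    define s where "s x = (SOME C. C \<in> Pre A \<and> x \<in> \<Union>(D C))" for x
    have s: "s x \<in> Pre A \<and> x \<in> \<Union>(D (s x))" if "x \<in> F" for x
      using F(1) that unfolding s_def YP_def by (metis (mono_tags, lifting) IntE UN_iff someI_ex subsetD)
    have "F \<noteq> {}" using F d by auto
    then obtain x0 where x0: "x0 \<in> F" "\<forall>y\<in>F. (s y, s x0) \<in> W"
      using co_max[of "s ` F" \<A>] F(2) s Pre_sub unfolding W_def by fastforce
    define b0 where "b0 = s x0"
    have b0: "b0 \<in> Pre A" using s x0 b0_def by auto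
    have "F \<subseteq> B \<inter> \<Union>(D b0)"
    proof
      fix y assume y: "y \<in> F"
      then have "D (s y) \<subseteq> D b0" using x0 D_mono b0_def by blast
      then show "y \<in> B \<inter> \<Union>(D b0)" using s[OF y] F y by blast
    qed
    moreover have "(b0, A) \<in> W" using b0 unfolding Pre_def underS_def by simp
    then have "A \<in> \<A>" using co_field[of b0 A \<A>] unfolding W_def by blast
    then have "B \<in> \<A>" using B E_sub D_sub by blast
    ultimately have "B \<in> D b0" unfolding D_def using cl_closed F(2,3) by blast
    then show False using B b0 unfolding E_def by blast
  qed
  have E_cover: "\<exists>A\<in>\<A>. B \<in> E A" if B: "B \<in> \<A>" for B
  proof -
    have "B \<in> D B" unfolding D_def using cl_ext by blast
    then have ne: "B \<in> {A \<in> \<A>. B \<in> D A}" using B by blast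
    obtain A0 where A0: "A0 \<in> {A \<in> \<A>. B \<in> D A}" "\<And>y. (y, A0) \<in> R \<Longrightarrow> y \<notin> {A \<in> \<A>. B \<in> D A}"
      using wfE_min[OF wfR ne] by blast
    have "B \<notin> D C" if "C \<in> Pre A0" for C using A0(2)[of C] that Pre_iff Pre_sub by blast
    then show ?thesis using A0(1) unfolding E_def by blast
  qed
  have E_YP: "\<Union>(E A1) \<subseteq> YP A2" if "A1 \<in> Pre A2" for A1 A2
    using that E_sub unfolding YP_def by blast
  define Good where "Good A \<Phi> h \<longleftrightarrow> A \<in> \<A> \<longrightarrow>
      (dom h \<subseteq> \<Union>(E A) - (Y \<union> YP A) \<and> ran h \<subseteq> {..<\<rho>} \<and>
       (\<forall>B\<in>E A. \<exists>\<zeta><\<rho>. card {x\<in>B. ((g ++ U \<Phi> (Pre A)) ++ h) x = Some \<zeta>} = 1))"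
    for A and \<Phi> :: "'a set \<Rightarrow> 'a \<Rightarrow> nat option" and h
  have "\<exists>\<Phi>. \<forall>A. Good A \<Phi> (\<Phi> A)"
  proof (rule wf_choice[OF wfR])
    fix A f f' c
    assume eq: "\<And>b. (b, A) \<in> R \<Longrightarrow> f b = f' b" and G: "Good A f c"
    have "U f (Pre A) = U f' (Pre A)" by (rule U_cong) (use eq Pre_iff in auto)
    then show "Good A f' c" using G unfolding Good_def by simp
  next
    fix A f
    assume IHf: "\<And>b. (b, A) \<in> R \<Longrightarrow> Good b f (f b)"
    show "\<exists>c. Good A f c"
    proof (cases "A \<in> \<A>")
      case False then show ?thesis unfolding Good_def by blast
    next
      case A: True
      have domB: "dom (f B) \<subseteq> \<Union>(E B)" if "B \<in> Pre A" for B
        using IHf[of B] Pre_iff Pre_sub that unfolding Good_def by blast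
      define G where "G = g ++ U f (Pre A)"
      have domU: "dom (U f (Pre A)) \<subseteq> YP A" using dom_U[of f "Pre A"] domB E_YP by blast
      have domG: "dom G \<subseteq> Y \<union> YP A" unfolding G_def using gY domU by auto
      have EA: "E A \<subseteq> \<A>" using E_sub[of A] D_sub[OF A] by (rule order_trans)
      have "\<exists>h. dom h \<subseteq> \<Union>(E A) - (Y \<union> YP A) \<and> ran h \<subseteq> {..<(p + (d - 1) + m * (d - 1) + d) div 2 + 1} \<and>
           (\<forall>B\<in>E A. \<exists>\<zeta><(p + (d - 1) + m * (d - 1) + d) div 2 + 1. card {x\<in>B. (G ++ h) x = Some \<zeta>} = 1)"
      proof (rule IH)
        show "|E A| \<le>o |L'|" using card_of_mono1[OF E_sub[of A]] D_card[OF A] by (rule ordLeq_transitive)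
        show "almost_disjoint_fin d (E A)" using AD_mono[OF AD EA] .
        show "\<forall>B\<in>E A. |B| =o |K|" using mem EA by blast
        show "\<forall>B\<in>E A. finite (B \<inter> (Y \<union> YP A))" using Yf EA E_fin by (auto simp: Int_Un_distrib)
        show "dom G \<subseteq> Y \<union> YP A" by (rule domG)
        show "\<forall>B\<in>E A. card (B \<inter> dom G) \<le> p + (d - 1)"
        proof
          fix B assume B: "B \<in> E A"
          have sub: "B \<inter> dom G \<subseteq> (B \<inter> dom g) \<union> (B \<inter> YP A)" using domU unfolding G_def by auto
          have f1: "finite (B \<inter> dom g)" using Yf B EA gY by (meson Int_mono finite_subset order_refl subsetD)
          have f2: "finite (B \<inter> YP A)" "card (B \<inter> YP A) < d" using E_fin B by auto
          have "card (B \<inter> dom G) \<le> card ((B \<inter> dom g) \<union> (B \<inter> YP A))"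
            using sub f1 f2 by (intro card_mono) auto
          also have "\<dots> \<le> card (B \<inter> dom g) + card (B \<inter> YP A)" by (rule card_Un_le)
          finally show "card (B \<inter> dom G) \<le> p + (d - 1)" using gp B EA f2 by fastforce
        qed
      qed
      then show ?thesis unfolding Good_def \<rho>' G_def by blast
    qed
  qed
  then obtain \<Phi> where \<Phi>: "\<And>A. Good A \<Phi> (\<Phi> A)" by blast
  have dom\<Phi>: "dom (\<Phi> A) \<subseteq> \<Union>(E A) - (Y \<union> YP A)" and ran\<Phi>: "ran (\<Phi> A) \<subseteq> {..<\<rho>}"
    and uq: "\<forall>B\<in>E A. \<exists>\<zeta><\<rho>. card {x\<in>B. ((g ++ U \<Phi> (Pre A)) ++ \<Phi> A) x = Some \<zeta>} = 1"
    if "A \<in> \<A>" for A using \<Phi>[of A] that unfolding Good_def by blast+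
  have notin: "x \<notin> dom (\<Phi> B)" if "A \<in> Pre B" "x \<in> \<Union>(D A)" "B \<in> \<A>" for A B x
    using dom\<Phi>[OF that(3)] that unfolding YP_def by blast
  have disj: "dom (\<Phi> A) \<inter> dom (\<Phi> B) = {}" if "A \<in> \<A>" "B \<in> \<A>" "A \<noteq> B" for A B
  proof -
    have "A \<in> Pre B \<or> B \<in> Pre A" using co_total[of A \<A> B] that unfolding Pre_def W_def underS_def by auto
    then show ?thesis using notin dom\<Phi> that E_sub by blast
  qed
  define H where "H = U \<Phi> \<A>"
  show ?thesis
  proof (intro exI[of _ H] conjI ballI)
    show "dom H \<subseteq> \<Union>\<A> - Y" unfolding H_def using dom_U[of \<Phi> \<A>] dom\<Phi> E_sub D_sub by blast
    show "ran H \<subseteq> {..<(p + Suc m * (d - 1) + d) div 2 + 1}" unfolding H_def \<rho>_def[symmetric]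
      using ran_U[of \<Phi> \<A>] ran\<Phi> by blast
    fix B assume B: "B \<in> \<A>"
    obtain A where A: "A \<in> \<A>" "B \<in> E A" using E_cover[OF B] by blast
    have loc: "H x = (U \<Phi> (Pre A) ++ \<Phi> A) x" if "x \<in> B" for x
      unfolding H_def
    proof (rule U_local[OF disj A(1) Pre_sub A_notin_Pre])
      fix b assume b: "b \<in> \<A>" "x \<in> dom (\<Phi> b)"
      show "b \<in> Pre A \<or> b = A"
      proof (rule ccontr)
        assume "\<not> ?thesis"
        then have "A \<in> Pre b" using co_total[of A \<A> b] A b unfolding Pre_def W_def underS_def by auto
        moreover have "x \<in> \<Union>(D A)" using that A E_sub by blast
        ultimately show False using notin[of A b x] b by blast
      qed
    qed
    have "{x\<in>B. (g ++ H) x = Some \<zeta>} = {x\<in>B. ((g ++ U \<Phi> (Pre A)) ++ \<Phi> A) x = Some \<zeta>}" for \<zeta>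
      using loc by (auto simp: map_add_def split: option.splits)
    then show "\<exists>\<zeta><(p + Suc m * (d - 1) + d) div 2 + 1. card {x\<in>B. (g ++ H) x = Some \<zeta>} = 1"
      using uq[OF A(1)] A(2) unfolding \<rho>_def by simp
  qed
qed



lemma hcsi_ge: "has_card_suc_iter m K L \<Longrightarrow> |K| \<le>o |L|"
proof (induction m arbitrary: L)
  case 0 then show ?case using ordIso_iff_ordLeq ordIso_symmetric by (simp, blast)
next
  case (Suc m)
  then obtain L' where L': "L' \<subseteq> L" "has_card_suc_iter m K L'" "|L| =o cardSuc |L'|" by auto
  have "|K| \<le>o |L'|" using Suc.IH L'(2) .
  also have "|L'| \<le>o cardSuc |L'|" by (rule cardSuc_ordLeq[OF card_of_Card_order])
  also have "cardSuc |L'| \<le>o |L|" using L'(3) ordIso_iff_ordLeq ordIso_symmetric by blast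
  finally show ?case .
qed

lemma main:
  fixes K :: "'k set" and L :: "'a set set" and g :: "'a \<Rightarrow> nat option"
  assumes K: "infinite K" and d: "d > 0"
  shows "has_card_suc_iter m K L \<Longrightarrow> |\<A>| \<le>o |L| \<Longrightarrow> almost_disjoint_fin d \<A> \<Longrightarrow> (\<forall>A\<in>\<A>. |A| =o |K| ) \<Longrightarrow>
        (\<forall>A\<in>\<A>. finite (A \<inter> Y)) \<Longrightarrow> dom g \<subseteq> Y \<Longrightarrow> (\<forall>A\<in>\<A>. card (A \<inter> dom g) \<le> p) \<Longrightarrow>
        \<exists>h. dom h \<subseteq> \<Union>\<A> - Y \<and> ran h \<subseteq> {..<(p + m * (d - 1) + d) div 2 + 1} \<and>
           (\<forall>A\<in>\<A>. \<exists>\<zeta><(p + m * (d - 1) + d) div 2 + 1. card {x\<in>A. (g ++ h) x = Some \<zeta>} = 1)"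
proof (induction m arbitrary: L \<A> p Y g)
  case 0
  then have "|\<A>| \<le>o |K|" using ordLeq_ordIso_trans by simp
  then show ?case using base_case[OF K d _ 0(3-7)] by simp
next
  case (Suc m)
  then obtain L' where L': "L' \<subseteq> L" "has_card_suc_iter m K L'" "|L| =o cardSuc |L'|" by auto
  have card: "|\<A>| \<le>o cardSuc |L'|" using Suc.prems(2) L'(3) ordLeq_ordIso_trans by blast
  show ?case
    by (rule step_case[OF K d Suc.IH[OF L'(2)] hcsi_ge[OF L'(2)] card Suc.prems(3-7)])
qed


theorem theorem5p1:
  fixes K :: "'k set" and d m :: nat
  assumes "infinite K" and "d > 0"
  shows "\<forall>\<A> :: 'a set set. is_system m K d \<A> \<longrightarrow>
           (\<exists>f. weak_cf_coloring \<A> (((m + 1) * (d - 1) + 1) div 2 + 1) f)"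
proof (intro allI impI)
  fix \<A> :: "'a set set"
  assume S: "is_system m K d \<A>"
  have refl: "|\<A>| \<le>o |\<A>|" using ordIso_iff_ordLeq ordIso_refl card_of_Card_order by blast
  have eq: "0 + m * (d - 1) + d = (m + 1) * (d - 1) + 1" using assms(2) by (cases d) auto
  obtain h :: "'a \<Rightarrow> nat option" where h: "dom h \<subseteq> \<Union>\<A> - {}"
      "ran h \<subseteq> {..<(0 + m * (d - 1) + d) div 2 + 1}"
      "\<forall>A\<in>\<A>. \<exists>\<zeta><(0 + m * (d - 1) + d) div 2 + 1. card {x\<in>A. (Map.empty ++ h) x = Some \<zeta>} = 1"
    using main[OF assms, of m \<A> \<A> "{}" "Map.empty" 0] S refl
    unfolding is_system_def by auto
  show "\<exists>f. weak_cf_coloring \<A> (((m + 1) * (d - 1) + 1) div 2 + 1) f"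
    using h unfolding weak_cf_coloring_def eq by (intro exI[of _ h]) auto
qed

end
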